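(* Let $k\ge 2$ and let $\alpha_1,\dots,\alpha_k$ be nonnegative rational numbers such that the sum of any $k-1$ of them is at most $1$ and $\alpha_1+\cdots+\alpha_k>1$. For every integer $g\ge 0$, the number $f(g)$ of $\alpha$-communal $k$-tuples whose entries sum to $g$ equals \[ f(g)=\binom{\sum_{i=1}^k \lfloor \alpha_i g\rfloor - g + k-1}{k-1}, \] where, as usual, $\binom{n}{r}=0$ for integers $0\le n<r$.
   Context: A $k$-tuple $[g_1,\dots,g_k]$ of integers is called $\alpha$-communal (for $\alpha=(\alpha_1,\dots,\alpha_k)$) if $0\le g_i\le \alpha_i\sum_{j=1}^k g_j$ for every $i$. For an integer $g\ge 0$, $f(g)$ denotes the number of $\alpha$-communal $k$-tuples $[g_1,\dots,g_k]$ with $\sum_i g_i=g$. *)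

theory Defs
  imports Complex_Main "HOL-Library.FuncSet"
begin

text \<open>A k-tuple of integers is represented as a function g :: nat \<Rightarrow> int on the index
set {0..<k} (extensional: equal to undefined outside). The weights alpha are
indexed by {0..<k} as well.\<close>

definition communal :: "nat \<Rightarrow> (nat \<Rightarrow> rat) \<Rightarrow> (nat \<Rightarrow> int) \<Rightarrow> bool" where
  "communal k \<alpha> x \<longleftrightarrow>
     (\<forall>i<k. 0 \<le> x i \<and> of_int (x i) \<le> \<alpha> i * of_int (\<Sum>j<k. x j))"

definition communal_count :: "nat \<Rightarrow> (nat \<Rightarrow> rat) \<Rightarrow> int \<Rightarrow> nat" where
  "communal_count k \<alpha> g =
     card {x \<in> extensional {..<k}. communal k \<alpha> x \<and> (\<Sum>i<k. x i) = g}"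

end

theory Submission
  imports Defs
begin

theorem mainTheorem1:
  fixes k :: nat and \<alpha> :: "nat \<Rightarrow> rat" and g :: int
  assumes "k \<ge> 2"
    and "\<forall>i<k. 0 \<le> \<alpha> i"
    and "\<forall>j<k. (\<Sum>i\<in>{..<k} - {j}. \<alpha> i) \<le> 1"
    and "(\<Sum>i<k. \<alpha> i) > 1"
    and "g \<ge> 0"
  shows "communal_count k \<alpha> g =
           nat ((\<Sum>i<k. \<lfloor>\<alpha> i * of_int g\<rfloor>) - g + int k - 1) choose (k - 1)"
proof -
  define a where "a i = \<lfloor>\<alpha> i * of_int g\<rfloor>" for i
  define N where "N = (\<Sum>i<k. a i) - g"
  define A where "A = {x \<in> extensional {..<k}. (\<forall>i<k. 0 \<le> x i \<and> x i \<le> a i) \<and> (\<Sum>i<k. x i) = g}"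
  have setA: "{x \<in> extensional {..<k}. communal k \<alpha> x \<and> (\<Sum>i<k. x i) = g} = A"
    unfolding A_def communal_def a_def by (auto simp: le_floor_iff)
  have cnt: "communal_count k \<alpha> g = card A"
    unfolding communal_count_def setA ..
  have bound: "N \<le> a i" if "i < k" for i
  proof -
    have s: "(\<Sum>j<k. a j) = a i + (\<Sum>j\<in>{..<k} - {i}. a j)"
      using that by (simp add: sum.remove)
    have "of_int (\<Sum>j\<in>{..<k} - {i}. a j) \<le> (\<Sum>j\<in>{..<k} - {i}. \<alpha> j * of_int g)"
      unfolding of_int_sum a_def by (rule sum_mono) simp
    also have "\<dots> = (\<Sum>j\<in>{..<k} - {i}. \<alpha> j) * of_int g"
      by (simp add: sum_distrib_right)
    also have "\<dots> \<le> 1 * of_int g"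
      using assms(3) assms(5) that by (intro mult_right_mono) auto
    finally have "of_int (\<Sum>j\<in>{..<k} - {i}. a j) \<le> (of_int g :: rat)" by simp
    then have "(\<Sum>j\<in>{..<k} - {i}. a j) \<le> g" by (simp only: of_int_le_iff)
    then show ?thesis unfolding N_def s by simp
  qed
  have apos: "0 \<le> a i" if "i < k" for i
    using assms(2) assms(5) that unfolding a_def by simp
  show ?thesis
  proof (cases "N < 0")
    case True
    have "A = {}"
    proof (rule ccontr)
      assume "A \<noteq> {}"
      then obtain x where x: "x \<in> A" by blast
      have "(\<Sum>i<k. x i) \<le> (\<Sum>i<k. a i)"
        using x unfolding A_def by (intro sum_mono) auto
      then show False using x True unfolding A_def N_def by auto
    qed
    moreover have "nat ((\<Sum>i<k. \<lfloor>\<alpha> i * of_int g\<rfloor>) - g + int k - 1) < k - 1"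
      using True assms(1) unfolding N_def a_def by linarith
    ultimately show ?thesis using cnt by simp
  next
    case False
    define B where "B = {l::nat list. length l = k \<and> sum_list l = nat N}"
    define F where "F x = map (\<lambda>i. nat (a i - x i)) [0..<k]" for x :: "nat \<Rightarrow> int"
    define G where "G l = restrict (\<lambda>i. a i - int (l!i)) {..<k}" for l :: "nat list"
    have sl: "sum_list (map f [0..<k]) = (\<Sum>i<k. f i)" for f :: "nat \<Rightarrow> nat"
      by (simp add: sum_list_sum_nth atLeast0LessThan)
    have "bij_betw F A B"
    proof (rule bij_betw_byWitness[where f' = G])
      show "\<forall>x\<in>A. G (F x) = x"
        unfolding A_def F_def G_def by (auto simp: restrict_def extensional_def)
      show "\<forall>l\<in>B. F (G l) = l"
        unfolding B_def F_def G_def by (auto intro: nth_equalityI)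
      show "F ` A \<subseteq> B"
      proof
        fix l assume "l \<in> F ` A"
        then obtain x where x: "x \<in> A" and l: "l = F x" by blast
        have "int (sum_list l) = (\<Sum>i<k. int (nat (a i - x i)))"
          unfolding l F_def sl by simp
        also have "\<dots> = (\<Sum>i<k. a i - x i)"
          using x unfolding A_def by (intro sum.cong) auto
        also have "\<dots> = N" using x unfolding A_def N_def by (simp add: sum_subtractf)
        finally show "l \<in> B" using False unfolding B_def l F_def by auto
      qed
      show "G ` B \<subseteq> A"
      proof
        fix y assume "y \<in> G ` B"
        then obtain l where l: "l \<in> B" and y: "y = G l" by blast
        have le: "int (l!i) \<le> N" if "i < k" for i
        proof -
          have "l!i \<le> sum_list l"
            using l that elem_le_sum_list[of i l] unfolding B_def by simp
          then show ?thesis using l False unfolding B_def by auto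
        qed
        have "(\<Sum>i<k. y i) = (\<Sum>i<k. a i - int (l!i))"
          unfolding y G_def by simp
        also have "\<dots> = (\<Sum>i<k. a i) - int (\<Sum>i<k. l!i)"
          by (simp add: sum_subtractf)
        also have "(\<Sum>i<k. l!i) = sum_list l"
          using l unfolding B_def by (simp add: sum_list_sum_nth atLeast0LessThan)
        finally have "(\<Sum>i<k. y i) = g"
          using l False unfolding B_def N_def by simp
        moreover have "\<forall>i<k. 0 \<le> y i \<and> y i \<le> a i"
          using le bound unfolding y G_def by force
        moreover have "y \<in> extensional {..<k}" unfolding y G_def by simp
        ultimately show "y \<in> A" unfolding A_def by blast
      qed
    qed
    then have "card A = card B" by (rule bij_betw_same_card)
    also have "\<dots> = (nat N + k - 1) choose nat N"
      unfolding B_def by (rule card_length_sum_list)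
    also have "\<dots> = (nat N + k - 1) choose (k - 1)"
      using assms(1) by (subst binomial_symmetric) auto
    also have "nat N + k - 1 = nat ((\<Sum>i<k. \<lfloor>\<alpha> i * of_int g\<rfloor>) - g + int k - 1)"
      using False assms(1) unfolding N_def a_def by linarith
    finally show ?thesis using cnt by simp
  qed
qed

end
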